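(* Let $2\le m\le n$, let $R,S$ be complex $m\times n$ matrices and let $|\psi\rangle=|0\rangle\otimes\sum_{j,k}R_{jk}|j\rangle|k\rangle+|1\rangle\otimes\sum_{j,k}S_{jk}|j\rangle|k\rangle\in\mathbb{C}^2\otimes\mathbb{C}^m\otimes\mathbb{C}^n$, with associated matrix pencil $\mathcal{P}=\mu R+\lambda S$. Suppose that there are invertible matrices $B\in GL(m,\mathbb{C})$, $C\in GL(n,\mathbb{C})$ and positive integers $\epsilon,\nu$ such that $B\mathcal{P}C^T=\mathrm{blockdiag}\{L_\epsilon,L_\nu^T,\tilde{\mathcal{P}}\}$ for some (possibly empty) matrix pencil $\tilde{\mathcal{P}}$ of size $(m-\epsilon-\nu-1)\times(n-\epsilon-\nu-1)$. Then $|\psi\rangle$ (and hence its whole SLOCC class $G|\psi\rangle$) lies in the null-cone.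
   Context: $G=SL(2,\mathbb{C})\times SL(m,\mathbb{C})\times SL(n,\mathbb{C})$ acts by $A\otimes B\otimes C$; the null-cone is the set of vectors $|\phi\rangle$ with $0\in\overline{G|\phi\rangle}$ (standard topology). Here $\lambda,\mu$ are formal variables, and $L_\epsilon$ is the $\epsilon\times(\epsilon+1)$ pencil with entries $\lambda$ at positions $(i,i)$ and $\mu$ at positions $(i,i+1)$, $i=1,\dots,\epsilon$, all other entries zero; $L_\nu^T$ is the transpose of $L_\nu$ (size $(\nu+1)\times\nu$). *)

theory Defs
  imports "Jordan_Normal_Form.Determinant"
begin

text \<open>A tensor in C^2 (x) C^m (x) C^n is a function psi i j k (i<2, j<m, k<n).
  The tensor |0>(x)R + |1>(x)S associated with two m x n matrices R, S.\<close>
definition tensor_of :: "complex mat \<Rightarrow> complex mat \<Rightarrow> nat \<Rightarrow> nat \<Rightarrow> nat \<Rightarrow> complex" where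
  "tensor_of R S i j k = (if i = 0 then R $$ (j, k) else S $$ (j, k))"

definition act :: "nat \<Rightarrow> nat \<Rightarrow> complex mat \<Rightarrow> complex mat \<Rightarrow> complex mat
    \<Rightarrow> (nat \<Rightarrow> nat \<Rightarrow> nat \<Rightarrow> complex) \<Rightarrow> nat \<Rightarrow> nat \<Rightarrow> nat \<Rightarrow> complex" where
  "act m n A B C psi i j k =
     (\<Sum>i'<2. \<Sum>j'<m. \<Sum>k'<n. A $$ (i, i') * B $$ (j, j') * C $$ (k, k') * psi i' j' k')"

definition in_G :: "nat \<Rightarrow> nat \<Rightarrow> complex mat \<Rightarrow> complex mat \<Rightarrow> complex mat \<Rightarrow> bool" where
  "in_G m n A B C \<longleftrightarrow>
     A \<in> carrier_mat 2 2 \<and> det A = 1 \<and>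
     B \<in> carrier_mat m m \<and> det B = 1 \<and>
     C \<in> carrier_mat n n \<and> det C = 1"

text \<open>Null-cone: 0 lies in the closure of the G-orbit (standard topology on the
  finite-dimensional space C^(2mn); written with the max-norm of coordinates).\<close>
definition null_cone :: "nat \<Rightarrow> nat \<Rightarrow> (nat \<Rightarrow> nat \<Rightarrow> nat \<Rightarrow> complex) \<Rightarrow> bool" where
  "null_cone m n psi \<longleftrightarrow>
     (\<forall>e>0. \<exists>A B C. in_G m n A B C \<and>
        (\<forall>i<2. \<forall>j<m. \<forall>k<n. cmod (act m n A B C psi i j k) < e))"

text \<open>A matrix pencil mu X + lambda Y is represented by the pair (X, Y)
  (coefficient of mu, coefficient of lambda).\<close>

definition L_mu :: "nat \<Rightarrow> complex mat" where
  "L_mu e = mat e (e + 1) (\<lambda>(i, j). if j = i + 1 then 1 else 0)"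
definition L_lam :: "nat \<Rightarrow> complex mat" where
  "L_lam e = mat e (e + 1) (\<lambda>(i, j). if j = i then 1 else 0)"

definition blockdiag3 :: "complex mat \<Rightarrow> complex mat \<Rightarrow> complex mat \<Rightarrow> complex mat" where
  "blockdiag3 X Y Z =
     four_block_mat X (0\<^sub>m (dim_row X) (dim_col Y + dim_col Z))
       (0\<^sub>m (dim_row Y + dim_row Z) (dim_col X))
       (four_block_mat Y (0\<^sub>m (dim_row Y) (dim_col Z)) (0\<^sub>m (dim_row Z) (dim_col Y)) Z)"

end

theory Submission imports Defs begin

lemma triple_entry:
  assumes "B \<in> carrier_mat m m" "X \<in> carrier_mat m n" "C \<in> carrier_mat n n" "j < m" "k < n"
  shows "(B * X * transpose_mat C) $$ (j,k) = (\<Sum>j'<m. \<Sum>k'<n. B$$(j,j') * X$$(j',k') * C$$(k,k'))"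
proof -
  have d: "dim_row (B * X) = m" "dim_col (B*X) = n" "dim_row (transpose_mat C) = n" "dim_col (transpose_mat C) = n"
    using assms by auto
  have "(B * X * transpose_mat C) $$ (j,k) = (\<Sum>ia=0..<n. (B*X) $$ (j,ia) * C $$ (k, ia))"
    using assms d by (subst index_mult_mat) (auto simp: scalar_prod_def)
  also have "\<dots> = (\<Sum>ia=0..<n. \<Sum>i=0..<m. B $$ (j, i) * X $$ (i, ia) * C $$ (k, ia))"
    using assms by (intro sum.cong refl) (simp add: scalar_prod_def sum_distrib_right)
  also have "\<dots> = (\<Sum>i=0..<m. \<Sum>ia=0..<n. B $$ (j, i) * X $$ (i, ia) * C $$ (k, ia))"
    by (rule sum.swap)
  finally show ?thesis by (simp add: lessThan_atLeast0)
qed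

lemma blockdiag_nz:
  assumes "P \<in> carrier_mat p1 q1" "Q \<in> carrier_mat p2 q2" "Z \<in> carrier_mat p3 q3"
    "j < p1+p2+p3" "k < q1+q2+q3" "blockdiag3 P Q Z $$ (j,k) \<noteq> 0"
  shows "(j<p1 \<and> k<q1) \<or> (p1\<le>j \<and> j<p1+p2 \<and> q1 \<le> k \<and> k<q1+q2) \<or> (p1+p2 \<le> j \<and> q1+q2 \<le> k)"
  using assms unfolding blockdiag3_def
  by (auto split: if_splits)

lemma sum1:
  fixes c :: real and a m :: nat
  shows "(\<Sum>i<m. if i < a then c else 0) = min m a * c"
  by (induction m) (auto simp: min_def algebra_simps)

lemma sum3:
  fixes x y z :: real and a b m :: nat
  assumes "a \<le> b"
  shows "(\<Sum>i<m. if i < a then x else if i < b then y else z) = min m a * x + (min m b - min m a) * y + (m - min m b) * z"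
proof -
  have "(\<Sum>i<m. if i < a then x else if i < b then y else z) =
     (\<Sum>i<m. (if i < a then x - y else 0) + (if i < b then y - z else 0) + z)"
    using assms by (intro sum.cong) auto
  also have "\<dots> = min m a * (x-y) + min m b * (y - z) + m * z"
    by (simp add: sum.distrib sum1)
  finally show ?thesis using assms by (simp add: algebra_simps of_nat_diff)
qed

lemma det_diag:
  assumes "D = mat m m (\<lambda>(i,j). if i = j then f i else 0)"
  shows "det D = (\<Prod>i<m. f i)"
proof -
  have "upper_triangular D" using assms by (auto simp: upper_triangular_def)
  moreover have "D \<in> carrier_mat m m" using assms by auto
  ultimately have "det D = prod_list (diag_mat D)" by (rule det_upper_triangular)
  also have "\<dots> = (\<Prod>i<m. f i)" unfolding prod_list_diag_prod using assms
    by (auto simp: lessThan_atLeast0)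
  finally show ?thesis .
qed

lemma diag_mult_entry:
  assumes "D = mat m m (\<lambda>(i,j). if i = j then f i else 0)" "B \<in> carrier_mat m m" "j < m" "j' < m"
  shows "(D * B) $$ (j,j') = f j * B $$ (j,j')"
proof -
  have "(D * B) $$ (j,j') = (\<Sum>i\<in>{0..<m}. D $$ (j,i) * B $$ (i,j'))"
    using assms by (simp add: scalar_prod_def)
  also have "\<dots> = (\<Sum>i\<in>{0..<m}. if i = j then f j * B $$ (i,j') else 0)"
    using assms by (intro sum.cong) auto
  also have "\<dots> = f j * B $$ (j,j')" using assms by simp
  finally show ?thesis .
qed

lemma prod_fix:
  fixes z :: complex and g :: "nat \<Rightarrow> complex" assumes "0 < m"
  shows "(\<Prod>j<m. (if j = 0 then z else 1) * g j) = z * (\<Prod>j<m. g j)"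
  using assms by (simp add: prod.distrib prod.delta)

lemma sum2_2: "(\<Sum>i'<(2::nat). f i') = f 0 + f 1"
  by (simp add: numeral_2_eq_2)

lemma act_diag:
  assumes "D = mat m m (\<lambda>(i,j). if i = j then f i else 0)"
    "E = mat n n (\<lambda>(i,j). if i = j then g i else 0)"
    "B \<in> carrier_mat m m" "C \<in> carrier_mat n n" "R \<in> carrier_mat m n" "S \<in> carrier_mat m n"
    "i < 2" "j < m" "k < n"
  shows "act m n (1\<^sub>m 2) (D*B) (E*C) (tensor_of R S) i j k
     = f j * g k * (B * (if i = 0 then R else S) * transpose_mat C) $$ (j,k)"
proof -
  define X where "X = (if i = 0 then R else S)"
  have X: "X \<in> carrier_mat m n" using assms unfolding X_def by auto
  have "act m n (1\<^sub>m 2) (D*B) (E*C) (tensor_of R S) i j k =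
     (\<Sum>j'<m. \<Sum>k'<n. (D*B) $$ (j, j') * (E*C) $$ (k, k') * X $$ (j',k'))"
    unfolding act_def sum2_2 using assms(7) unfolding X_def tensor_of_def
    by (cases i) auto
  also have "\<dots> = (\<Sum>j'<m. \<Sum>k'<n. f j * g k * (B $$ (j, j') * X $$ (j',k') * C $$ (k, k')))"
    by (intro sum.cong refl) (simp del: index_mult_mat add: diag_mult_entry[OF assms(1) assms(3) assms(8)] diag_mult_entry[OF assms(2) assms(4) assms(9)])
  also have "\<dots> = f j * g k * (\<Sum>j'<m. \<Sum>k'<n. B $$ (j, j') * X $$ (j',k') * C $$ (k, k'))"
    by (simp add: sum_distrib_left)
  also have "\<dots> = f j * g k * (B * X * transpose_mat C) $$ (j,k)"
    using triple_entry[OF assms(3) X assms(4) assms(8) assms(9)] by simp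
  finally show ?thesis unfolding X_def .
qed

lemma le_double_sum:
  fixes g :: "nat \<Rightarrow> nat \<Rightarrow> real"
  assumes "\<And>j k. 0 \<le> g j k" "j < m" "k < n"
  shows "g j k \<le> (\<Sum>j<m. \<Sum>k<n. g j k)"
proof -
  have "g j k \<le> (\<Sum>k<n. g j k)" using assms by (intro member_le_sum) auto
  also have "\<dots> \<le> (\<Sum>j<m. \<Sum>k<n. g j k)" using assms
    by (intro member_le_sum[where f = "\<lambda>j. \<Sum>k<n. g j k"]) (auto intro: sum_nonneg)
  finally show ?thesis .
qed


lemma L_dims[simp]: "L_mu e \<in> carrier_mat e (e+1)" "L_lam e \<in> carrier_mat e (e+1)"
  "dim_row (L_mu e) = e" "dim_col (L_mu e) = e+1" "dim_row (L_lam e) = e" "dim_col (L_lam e) = e+1"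
  by (auto simp: L_mu_def L_lam_def)

theorem mainTheorem8:
  fixes m n eps nu :: nat and R S B C Pmu Plam :: "complex mat"
  assumes "2 \<le> m" and "m \<le> n"
    and "R \<in> carrier_mat m n" and "S \<in> carrier_mat m n"
    and "B \<in> carrier_mat m m" and "det B \<noteq> 0"
    and "C \<in> carrier_mat n n" and "det C \<noteq> 0"
    and "0 < eps" and "0 < nu"
    and "Pmu \<in> carrier_mat (m - eps - nu - 1) (n - eps - nu - 1)"
    and "Plam \<in> carrier_mat (m - eps - nu - 1) (n - eps - nu - 1)"
    and "B * R * transpose_mat C = blockdiag3 (L_mu eps) (transpose_mat (L_mu nu)) Pmu"
    and "B * S * transpose_mat C = blockdiag3 (L_lam eps) (transpose_mat (L_lam nu)) Plam"
  shows "null_cone m n (tensor_of R S)"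
proof -
  define N where "N = eps + nu + 1"
  have BRC: "B * R * transpose_mat C \<in> carrier_mat m n" using assms(3,5,7) by auto
  have dimr: "eps + (nu + 1 + (m - eps - nu - 1)) = m"
    using arg_cong[OF assms(13), of dim_row] BRC assms(11) unfolding blockdiag3_def by auto
  have dimc: "eps + 1 + (nu + (n - eps - nu - 1)) = n"
    using arg_cong[OF assms(13), of dim_col] BRC assms(11) unfolding blockdiag3_def by auto
  have mN: "N \<le> m" and nN: "N \<le> n" using dimr dimc unfolding N_def by arith+
  define Y where "Y = (\<lambda>i::nat. B * (if i = 0 then R else S) * transpose_mat C)"
  define bw :: "nat \<Rightarrow> real" where "bw = (\<lambda>j. if j < eps then real n * real (nu+1) else if j < N then - (real eps * real n) else 0)"
  define cw :: "nat \<Rightarrow> real" where "cw = (\<lambda>k. if k < eps + 1 then real N - real n * real (nu+1) else if k < N then real N + real eps * real n else real N)"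
  have sbw: "(\<Sum>j<m. bw j) = 0"
    unfolding bw_def using mN by (subst sum3) (auto simp: N_def min_def algebra_simps)
  have scw: "(\<Sum>k<n. cw k) = 0"
  proof -
    have "min n (eps + 1) = eps + 1" "min n N = N" using nN unfolding N_def by auto
    then have "(\<Sum>k<n. cw k) = real (eps+1) * (real N - real n * real (nu+1)) + (real N - real (eps+1)) * (real N + real eps * real n) + (real n - real N) * real N"
      unfolding cw_def using nN by (subst sum3) (auto simp: N_def of_nat_diff)
    then show ?thesis unfolding N_def by (simp add: algebra_simps)
  qed
  have supp: "bw j + cw k = real N" if "i < 2" "j < m" "k < n" "Y i $$ (j,k) \<noteq> 0" for i j k
  proof -
    have "(j<eps \<and> k<eps+1) \<or> (eps\<le>j \<and> j<eps+(nu+1) \<and> eps+1 \<le> k \<and> k<eps+1+nu) \<or> (eps+(nu+1) \<le> j \<and> eps+1+nu \<le> k)"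
    proof (cases "i = 0")
      case True
      then show ?thesis using that assms(11,13) dimr dimc
        by (intro blockdiag_nz[of "L_mu eps" _ _ "transpose_mat (L_mu nu)" _ _ Pmu "m - eps - nu - 1" "n - eps - nu - 1"])
           (auto simp: Y_def)
    next
      case False
      then show ?thesis using that assms(12,14) dimr dimc
        by (intro blockdiag_nz[of "L_lam eps" _ _ "transpose_mat (L_lam nu)" _ _ Plam "m - eps - nu - 1" "n - eps - nu - 1"])
           (auto simp: Y_def)
    qed
    then show ?thesis unfolding bw_def cw_def N_def by (auto simp: algebra_simps)
  qed
  define fB :: "nat \<Rightarrow> complex" where "fB = (\<lambda>j. if j = 0 then inverse (det B) else 1)"
  define fC :: "nat \<Rightarrow> complex" where "fC = (\<lambda>j. if j = 0 then inverse (det C) else 1)"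
  define KB where "KB = 1 + cmod (inverse (det B))"
  define KC where "KC = 1 + cmod (inverse (det C))"
  have fBle: "cmod (fB j) \<le> KB" for j unfolding fB_def KB_def by auto
  have fCle: "cmod (fC j) \<le> KC" for j unfolding fC_def KC_def by auto
  have KB0: "KB \<ge> 0" and KC0: "KC \<ge> 0" unfolding KB_def KC_def by (auto intro: add_nonneg_nonneg)
  define M where "M = (\<Sum>j<m. \<Sum>k<n. cmod (Y 0 $$ (j,k)) + cmod (Y 1 $$ (j,k))) + 1"
  have Mle: "cmod (Y i $$ (j,k)) \<le> M" if "i < 2" "j < m" "k < n" for i j k
  proof -
    have "cmod (Y 0 $$ (j,k)) + cmod (Y 1 $$ (j,k)) \<le> (\<Sum>j<m. \<Sum>k<n. cmod (Y 0 $$ (j,k)) + cmod (Y 1 $$ (j,k)))"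
      by (rule le_double_sum[where g = "\<lambda>j k. cmod (Y 0 $$ (j,k)) + cmod (Y 1 $$ (j,k))"]) (use that in auto)
    then have h1: "cmod (Y 0 $$ (j,k)) + cmod (Y 1 $$ (j,k)) \<le> M - 1" unfolding M_def by simp
    have h2: "cmod (Y 0 $$ (j,k)) \<ge> 0" "cmod (Y 1 $$ (j,k)) \<ge> 0" by auto
    have h3: "cmod (Y 0 $$ (j,k)) \<le> M" "cmod (Y 1 $$ (j,k)) \<le> M" using h1 h2 by linarith+
    have "i = 0 \<or> i = 1" using that by auto
    then show ?thesis using h3 by auto
  qed
  have M0: "M > 0" unfolding M_def by (auto intro!: add_nonneg_pos sum_nonneg)
  define K where "K = KB * KC * M"
  have K0: "K > 0" unfolding K_def KB_def KC_def using M0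
    by (intro mult_pos_pos add_pos_nonneg) auto
  show ?thesis unfolding null_cone_def
  proof (intro allI impI)
    fix e :: real assume e: "e > 0"
    define s where "s = min 1 (e / (2*K))"
    have s0: "s > 0" and s1: "s \<le> 1" and sK: "s * K \<le> e/2" using e K0 unfolding s_def
      by (auto simp: field_simps min_def)
    define D where "D = mat m m (\<lambda>(i,j). if i = j then fB i * of_real (s powr bw i) else 0)"
    define E where "E = mat n n (\<lambda>(i,j). if i = j then fC i * of_real (s powr cw i) else 0)"
    have prodr: "(\<Prod>j<p. complex_of_real (s powr w j)) = 1" if "(\<Sum>j<p. w j) = 0" for p w
    proof -
      have "(\<Prod>j<p. complex_of_real (s powr w j)) = of_real (\<Prod>j<p. s powr w j)" by simp
      also have "\<dots> = of_real (s powr (\<Sum>j<p. w j))" using s0 by (simp add: powr_sum)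
      finally show ?thesis using that s0 by simp
    qed
    have detD: "det D = inverse (det B)"
      using det_diag[OF D_def] prod_fix[of m "inverse (det B)" "\<lambda>j. of_real (s powr bw j)"] prodr[OF sbw] assms(1)
      unfolding fB_def by simp
    have detE: "det E = inverse (det C)"
      using det_diag[OF E_def] prod_fix[of n "inverse (det C)" "\<lambda>j. of_real (s powr cw j)"] prodr[OF scw] assms(1,2)
      unfolding fC_def by simp
    have G: "in_G m n (1\<^sub>m 2) (D * B) (E * C)"
      unfolding in_G_def using assms(5-8) detD detE
      by (auto simp: D_def E_def det_mult[of _ m] det_mult[of _ n])
    have small: "cmod (act m n (1\<^sub>m 2) (D * B) (E * C) (tensor_of R S) i j k) < e"
      if ijk: "i < 2" "j < m" "k < n" for i j k
    proof -
      have a: "act m n (1\<^sub>m 2) (D * B) (E * C) (tensor_of R S) i j k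
         = fB j * of_real (s powr bw j) * (fC k * of_real (s powr cw k)) * Y i $$ (j,k)"
        unfolding Y_def by (rule act_diag[OF D_def E_def assms(5,7,3,4) ijk])
      show ?thesis
      proof (cases "Y i $$ (j,k) = 0")
        case True then show ?thesis using a e by simp
      next
        case False
        have "s powr bw j * s powr cw k = s powr N" using supp[OF ijk False] by (simp add: powr_add[symmetric])
        also have "\<dots> \<le> s powr 1" using s0 s1 supp[OF ijk False] unfolding N_def by (intro powr_mono') auto
        finally have sp: "s powr bw j * s powr cw k \<le> s" using s0 by simp
        have "cmod (act m n (1\<^sub>m 2) (D * B) (E * C) (tensor_of R S) i j k)
           = cmod (fB j) * cmod (fC k) * (s powr bw j * s powr cw k) * cmod (Y i $$ (j,k))"
          unfolding a by (simp add: norm_mult)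
        also have "\<dots> \<le> KB * KC * s * M"
          using fBle[of j] fCle[of k] sp Mle[OF ijk] s0 KB0 KC0
          by (intro mult_mono) (auto intro: mult_nonneg_nonneg)
        also have "\<dots> = s * K" unfolding K_def by simp
        also have "\<dots> < e" using sK e by simp
        finally show ?thesis .
      qed
    qed
    show "\<exists>A B C. in_G m n A B C \<and> (\<forall>i<2. \<forall>j<m. \<forall>k<n. cmod (act m n A B C (tensor_of R S) i j k) < e)"
      using G small by blast
  qed
qed

end
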